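(* Consider long-range first-passage percolation on $\mathbb{Z}^d$ (setting in the context) with $r(k)=k^{-\alpha}$, $k\ge1$, where $\alpha>2d+1$. Let $\theta\in(0,1)$ and $c_1,c_2>0$. Then there is a constant $C>0$ such that for all $n\ge1$, $$\mathbb{P}\big(W_{\langle zw\rangle}\ge c_1n\text{ for all }z\in B(0,c_2n)\text{ and }w\notin B(z,n^\theta)\big)\ge1-Cn^{d+1-\theta(\alpha-d)}.$$
   Context: Let $d\ge1$, $\|x\|_1=\sum_i|x_i|$, $\|x\|_\infty=\max_i|x_i|$, and $B(u,s)=\{x\in\mathbb{Z}^d:\|x-u\|_\infty\le s\}$. Let $\mathcal{E}$ be the set of unordered pairs $e=\langle xy\rangle$ of distinct points of $\mathbb{Z}^d$, with length $\|e\|_1=\|x-y\|_1$. Let $(\omega_e)$ be i.i.d. mean-one exponential random variables and $W_e=\omega_e/r(\|e\|_1)$. *)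

theory Defs
  imports "HOL-Probability.Probability"
begin

text \<open>Points of Z^d are int^'d with d = CARD('d).\<close>

definition linf_norm :: "int ^ 'd \<Rightarrow> int" where
  "linf_norm x = Max (range (\<lambda>i. \<bar>x $ i\<bar>))"

definition l1_norm :: "int ^ 'd \<Rightarrow> int" where
  "l1_norm x = (\<Sum>i\<in>UNIV. \<bar>x $ i\<bar>)"

definition Box :: "int ^ 'd \<Rightarrow> real \<Rightarrow> (int ^ 'd) set" where
  "Box u s = {x. real_of_int (linf_norm (x - u)) \<le> s}"

definition LR_edges :: "(int ^ 'd) set set" where
  "LR_edges = {{x, y} | x y. x \<noteq> y}"

definition r_pow :: "real \<Rightarrow> real \<Rightarrow> real" where
  "r_pow \<alpha> k = k powr (- \<alpha>)"

definition LR_W :: "real \<Rightarrow> ((int ^ 'd) set \<Rightarrow> 'w \<Rightarrow> real) \<Rightarrow> int ^ 'd \<Rightarrow> int ^ 'd \<Rightarrow> 'w \<Rightarrow> real" where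
  "LR_W \<alpha> \<omega> z w x = \<omega> {z, w} x / r_pow \<alpha> (real_of_int (l1_norm (z - w)))"

end

theory Submission
  imports Defs
begin


lemma mvt_step:
  fixes s x :: real assumes s: "s > 0" and x: "x \<ge> 1"
  shows "s * (x+1) powr (-s-1) \<le> x powr (-s) - (x+1) powr (-s)"
proof -
  have "\<exists>z. x < z \<and> z < x+1 \<and> ((x+1) powr (-s) - x powr (-s) = ((x+1) - x) * ((-s) * z powr (-s - 1)))"
    by (rule MVT2) (use x in \<open>auto intro!: has_real_derivative_powr[of _ "-s", simplified]\<close>)
  then obtain z where z: "x < z" "z < x+1" "(x+1) powr (-s) - x powr (-s) = (-s) * z powr (-s - 1)" by auto
  have "(x+1) powr (-s-1) \<le> z powr (-s-1)"
    by (rule powr_mono2') (use z x s in auto)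
  hence "s * (x+1) powr (-s-1) \<le> s * z powr (-s-1)" using s by (simp add: mult_left_mono)
  with z(3) show ?thesis by linarith
qed

lemma tail_series:
  fixes s :: real and M :: nat
  assumes s: "s > 0" and M: "M \<ge> 2"
  defines "b \<equiv> \<lambda>m::nat. if M \<le> m then real m powr (-(s+1)) else 0"
  shows "summable b \<and> suminf b \<le> (real M - 1) powr (-s) / s"
proof -
  define u where "u = (\<lambda>n::nat. (max (real M - 1) (real n)) powr (-s))"
  have ev: "eventually (\<lambda>n. real n powr (-s) = u n) sequentially"
    unfolding u_def eventually_sequentially
    by (rule exI[of _ M]) (auto simp: max_def)
  have "(\<lambda>n. real n powr (-s)) \<longlonglongrightarrow> 0"
    by (rule tendsto_neg_powr) (use s in \<open>auto simp: filterlim_real_sequentially\<close>)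
  hence ul: "u \<longlonglongrightarrow> 0" using tendsto_cong[OF ev] by simp
  have tel: "(\<lambda>n. (u n - u (Suc n)) / s) sums ((u 0 - 0) / s)"
    using sums_divide[OF telescope_sums'[OF ul]] .
  have u0: "u 0 = (real M - 1) powr (-s)" using M by (simp add: u_def)
  have bnd: "b (Suc n) \<le> (u n - u (Suc n)) / s" for n
  proof (cases "M \<le> Suc n")
    case True
    hence eq: "u n = real n powr (-s)" "u (Suc n) = (real n + 1) powr (-s)"
      using M by (auto simp: u_def max_def add.commute)
    have "s * (real n+1) powr (-s-1) \<le> real n powr (-s) - (real n+1) powr (-s)"
      by (rule mvt_step) (use s True M in auto)
    moreover have "b (Suc n) = (real n+1) powr (-s-1)" using True
      by (simp add: b_def add.commute) (rule arg_cong[where f="\<lambda>e. (1 + real n) powr e"], simp)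
    ultimately show ?thesis using s eq by (simp add: pos_le_divide_eq mult.commute)
  next
    case False
    have "u (Suc n) \<le> u n" unfolding u_def
      by (rule powr_mono2') (use s M in auto)
    then show ?thesis using False s by (simp add: b_def)
  qed
  have b0: "\<And>n. 0 \<le> b n" by (simp add: b_def)
  have sm: "summable (\<lambda>n. b (Suc n))"
    by (rule summable_comparison_test[OF _ sums_summable[OF tel]]) (use bnd b0 in auto)
  have le: "suminf (\<lambda>n. b (Suc n)) \<le> (u 0 - 0) / s"
    using suminf_le[OF bnd sm sums_summable[OF tel]] sums_unique[OF tel] by simp
  have "b 0 = 0" using M by (simp add: b_def)
  moreover have "(\<lambda>n. b (Suc n)) sums suminf (\<lambda>n. b (Suc n))" using summable_sums[OF sm] .
  ultimately have bs: "b sums suminf (\<lambda>n. b (Suc n))" using sums_Suc_iff[of b] by simp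
  show ?thesis using sums_summable[OF bs] sums_unique[OF bs] le u0 by simp
qed


lemma linf_le_iff: "linf_norm (v::int^'d) \<le> k \<longleftrightarrow> (\<forall>i. \<bar>v$i\<bar> \<le> k)"
  unfolding linf_norm_def by (subst Max_le_iff) auto

lemma linf_ge: "\<bar>(v::int^'d)$i\<bar> \<le> linf_norm v"
  unfolding linf_norm_def by (rule Max_ge) auto

lemma linf_nonneg: "0 \<le> linf_norm (v::int^'d)"
  using linf_ge[of v] by (meson abs_ge_zero order_trans)

lemma linf_le_l1: "linf_norm (v::int^'d) \<le> l1_norm v"
proof -
  have "linf_norm v \<in> range (\<lambda>i. \<bar>v$i\<bar>)" unfolding linf_norm_def by (rule Max_in) auto
  then obtain i where "linf_norm v = \<bar>v$i\<bar>" by auto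
  also have "\<dots> \<le> l1_norm v" unfolding l1_norm_def
    by (rule member_le_sum) auto
  finally show ?thesis .
qed

lemma linf_minus: "linf_norm (- (v::int^'d)) = linf_norm v"
  unfolding linf_norm_def by simp

lemma l1_minus: "l1_norm (- (v::int^'d)) = l1_norm v"
  unfolding l1_norm_def by simp

lemma card_box:
  assumes "k \<ge> 0"
  shows "card {v::int^'d. linf_norm v \<le> k} = nat (2*k+1) ^ CARD('d)"
proof -
  have eq: "{v::int^'d. linf_norm v \<le> k} = vec_lambda ` (PiE UNIV (\<lambda>_. {-k..k}))"
  proof (rule set_eqI, rule iffI)
    fix v :: "int^'d" assume "v \<in> {v. linf_norm v \<le> k}"
    hence "\<forall>i. \<bar>v$i\<bar> \<le> k" by (simp add: linf_le_iff)
    hence "vec_nth v \<in> PiE UNIV (\<lambda>_. {-k..k})" by (auto simp: abs_le_iff minus_le_iff)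
    moreover have "v = vec_lambda (vec_nth v)" by simp
    ultimately show "v \<in> vec_lambda ` (PiE UNIV (\<lambda>_. {-k..k}))" by blast
  next
    fix v :: "int^'d" assume "v \<in> vec_lambda ` (PiE UNIV (\<lambda>_. {-k..k}))"
    then obtain f where "f \<in> PiE UNIV (\<lambda>_. {-k..k})" "v = vec_lambda f" by auto
    thus "v \<in> {v. linf_norm v \<le> k}" by (fastforce simp: linf_le_iff abs_le_iff minus_le_iff PiE_iff)
  qed
  have inj: "inj_on (vec_lambda :: ('d \<Rightarrow> int) \<Rightarrow> int^'d) A" for A
    by (rule inj_onI) (simp add: vec_lambda_inject)
  have "card {v::int^'d. linf_norm v \<le> k} = card (PiE (UNIV::'d set) (\<lambda>_. {-k..k}))"
    unfolding eq by (rule card_image[OF inj])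
  also have "\<dots> = nat (2*k+1) ^ CARD('d)"
    by (simp add: card_PiE)
  finally show ?thesis .
qed

lemma pow_diff_le:
  fixes x y :: real assumes "0 \<le> y" "y \<le> x"
  shows "x ^ Suc k - y ^ Suc k \<le> (x - y) * (Suc k * x ^ k)"
proof -
  have "(\<Sum>p<Suc k. x ^ p * y ^ (k - p)) \<le> (\<Sum>p<Suc k. x ^ k)"
  proof (rule sum_mono)
    fix p assume "p \<in> {..<Suc k}"
    hence "x ^ p * y ^ (k - p) \<le> x ^ p * x ^ (k - p)"
      using assms by (intro mult_left_mono power_mono) auto
    also have "\<dots> = x ^ k" using \<open>p \<in> {..<Suc k}\<close> by (simp add: power_add[symmetric])
    finally show "x ^ p * y ^ (k - p) \<le> x ^ k" .
  qed
  hence "(x - y) * (\<Sum>p<Suc k. x ^ p * y ^ (k - p)) \<le> (x - y) * (Suc k * x ^ k)"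
    using assms by (intro mult_left_mono) auto
  moreover have "x^Suc k - y^Suc k = (x-y)*(\<Sum>p<Suc k. x ^ p * y ^ (k - p))" by (rule diff_power_eq_sum)
  ultimately show ?thesis by linarith
qed

lemma card_shell:
  assumes m: "m \<ge> 1"
  shows "real (card {v::int^'d. linf_norm v = int m})
          \<le> 2 * real CARD('d) * 3 ^ (CARD('d) - 1) * real m ^ (CARD('d) - 1)"
proof -
  define d where "d = CARD('d)"
  have d: "d = Suc (d - 1)" unfolding d_def by simp
  have set: "{v::int^'d. linf_norm v = int m} = {v. linf_norm v \<le> int m} - {v. linf_norm v \<le> int m - 1}"
    by auto
  have fin: "finite {v::int^'d. linf_norm v \<le> int m - 1}" using card_box[of "int m - 1", where 'd='d] m
    by (intro card_ge_0_finite) simp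
  have sub: "{v::int^'d. linf_norm v \<le> int m - 1} \<subseteq> {v. linf_norm v \<le> int m}" by auto
  have "card {v::int^'d. linf_norm v = int m} = nat (2*int m+1) ^ d - nat (2*(int m - 1)+1) ^ d"
  proof -
    have a: "card {v::int^'d. linf_norm v \<le> int m} = nat (2*int m+1) ^ d" using card_box[where 'd='d] by (simp add: d_def)
    have b: "card {v::int^'d. linf_norm v \<le> int m - 1} = nat (2*(int m - 1)+1) ^ d" using card_box[where 'd='d, of "int m - 1"] m by (simp add: d_def)
    show ?thesis unfolding set card_Diff_subset[OF fin sub] a b ..
  qed
  hence "real (card {v::int^'d. linf_norm v = int m}) = (2*real m+1) ^ d - (2*real m-1) ^ d"
    using m by (simp add: of_nat_diff power_mono nat_mult_distrib)
  also have "\<dots> \<le> ((2*real m+1) - (2*real m-1)) * (d * (2*real m+1) ^ (d-1))"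
    using pow_diff_le[of "2*real m-1" "2*real m+1" "d-1"] m d by simp
  also have "\<dots> = 2 * d * (2*real m+1) ^ (d-1)" by simp
  also have "\<dots> \<le> 2 * d * (3 * real m) ^ (d-1)"
    using m by (intro mult_left_mono power_mono) auto
  finally show ?thesis by (simp add: d_def power_mult_distrib)
qed


lemma exp_tail:
  assumes P: "prob_space M"
    and D: "distributed M lborel X (\<lambda>t. ennreal (exponential_density 1 t))"
    and c: "0 \<le> c"
  shows "measure M {x \<in> space M. X x < c} \<le> c"
proof -
  interpret prob_space M by fact
  have Xm: "X \<in> borel_measurable M" using distributed_measurable[OF D] by simp
  have "measure M {x \<in> space M. X x < c} \<le> measure M {x \<in> space M. X x \<le> c}"
    by (rule finite_measure_mono) (use Xm in auto)
  also have "\<dots> = 1 - exp (- c * 1)"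
    using exponential_distributedD_le[OF D c] by simp
  also have "\<dots> \<le> c" using exp_ge_add_one_self[of "-c"] by simp
  finally show ?thesis .
qed


theorem lemma8p1:
  fixes M :: "'w measure"
    and \<omega> :: "(int ^ 'd) set \<Rightarrow> 'w \<Rightarrow> real"
    and \<alpha> \<theta> c\<^sub>1 c\<^sub>2 :: real
  assumes "prob_space M"
    and "prob_space.indep_vars M (\<lambda>_. borel) \<omega> LR_edges"
    and "\<And>e. e \<in> LR_edges \<Longrightarrow>
           distributed M lborel (\<omega> e) (\<lambda>t. ennreal (exponential_density 1 t))"
    and "\<alpha> > 2 * real CARD('d) + 1"
    and "0 < \<theta>" and "\<theta> < 1"
    and "0 < c\<^sub>1" and "0 < c\<^sub>2"
  shows "\<exists>C>0. \<forall>n::nat. 1 \<le> n \<longrightarrow>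
           measure M {x \<in> space M. \<forall>z \<in> Box 0 (c\<^sub>2 * real n).
               \<forall>w. w \<notin> Box z (real n powr \<theta>) \<longrightarrow> c\<^sub>1 * real n \<le> LR_W \<alpha> \<omega> z w x}
           \<ge> 1 - C * real n powr (real CARD('d) + 1 - \<theta> * (\<alpha> - real CARD('d)))"
proof -
  interpret P: prob_space M by fact
  note distr = assms(3)
  define d where "d = real CARD('d)"
  define s where "s = \<alpha> - d"
  have s: "s > 0" using assms(4) by (simp add: s_def d_def)
  define D where "D = 2 * d * 3 ^ (CARD('d) - 1)"
  have D: "D > 0" by (simp add: D_def d_def)
  define C where "C = (2*c\<^sub>2+1) ^ CARD('d) * (c\<^sub>1 * D) * (2 powr s / s)"
  have Cpos: "C > 0" using D s assms(7,8) by (simp add: C_def)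
  have edge: "{z, w} \<in> LR_edges" if "z \<noteq> w" for z w :: "int^'d"
    using that unfolding LR_edges_def by blast
  have omeas: "\<omega> e \<in> borel_measurable M" if "e \<in> LR_edges" for e
    using distributed_measurable[OF distr[OF that]] by simp
  show ?thesis
  proof (intro exI[of _ C] conjI allI impI)
    show "C > 0" by fact
    fix n :: nat assume n: "1 \<le> n"
    define R where "R = real n powr \<theta>"
    have R1: "1 \<le> R" unfolding R_def using n assms(5) by (intro ge_one_powr_ge_zero) auto
    define K where "K = nat \<lfloor>R\<rfloor> + 1"
    have fR: "1 \<le> \<lfloor>R\<rfloor>" using R1 by (simp add: le_floor_iff)
    have K2: "K \<ge> 2" using fR by (simp add: K_def le_nat_iff)
    have K_iff: "real m > R \<longleftrightarrow> K \<le> m" for m :: nat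
      unfolding K_def using R1 by linarith
    define cn where "cn = c\<^sub>1 * real n"
    have cn: "cn > 0" using n assms(7) by (simp add: cn_def)
    define A where "A = (\<lambda>z w. {x \<in> space M. \<omega> {z,w} x < cn * real_of_int (l1_norm (z - w)) powr (-\<alpha>)})"
    define T where "T = (\<lambda>(z::int^'d) m. if K \<le> m then (\<lambda>v. v + z) ` {v::int^'d. linf_norm v = int m} else {})"
    define B where "B = (\<lambda>z m. \<Union>w\<in>T z m. A z w)"
    define Z where "Z = Box (0::int^'d) (c\<^sub>2 * real n)"
    define U where "U = (\<Union>z\<in>Z. \<Union>m. B z m)"
    define G where "G = {x \<in> space M. \<forall>z \<in> Box 0 (c\<^sub>2 * real n).
               \<forall>w. w \<notin> Box z (real n powr \<theta>) \<longrightarrow> c\<^sub>1 * real n \<le> LR_W \<alpha> \<omega> z w x}"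

    have cn_eq: "c\<^sub>1 * real n = cn" by (simp add: cn_def)
    have memT: "w \<in> T z m \<longleftrightarrow> K \<le> m \<and> linf_norm (w - z) = int m" for z w m
    proof
      assume "w \<in> T z m" thus "K \<le> m \<and> linf_norm (w - z) = int m"
        by (auto simp: T_def split: if_splits)
    next
      assume h: "K \<le> m \<and> linf_norm (w - z) = int m"
      hence "w - z \<in> {v::int^'d. linf_norm v = int m}" by simp
      hence "(w - z) + z \<in> (\<lambda>v. v + z) ` {v::int^'d. linf_norm v = int m}" by (rule imageI)
      thus "w \<in> T z m" using h by (simp add: T_def)
    qed
    have Tiff: "(\<exists>m. w \<in> T z m) \<longleftrightarrow> w \<notin> Box z (real n powr \<theta>)" for z w
    proof
      assume "\<exists>m. w \<in> T z m"
      then obtain m where "K \<le> m" "linf_norm (w - z) = int m" by (auto simp: memT)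
      thus "w \<notin> Box z (real n powr \<theta>)" using K_iff[of m] by (auto simp: Box_def R_def)
    next
      assume h: "w \<notin> Box z (real n powr \<theta>)"
      define m where "m = nat (linf_norm (w - z))"
      have mi: "int m = linf_norm (w - z)" using linf_nonneg[of "w - z"] by (simp add: m_def)
      have "real m > R" using h mi by (simp add: Box_def R_def)
      hence "w \<in> T z m" using K_iff mi by (simp add: memT)
      thus "\<exists>m. w \<in> T z m" by blast
    qed
    have linfT: "linf_norm (w - z) \<ge> 1" if "w \<in> T z m" for z w m
      using that K2 by (auto simp: memT)
    have l1ge: "real_of_int (l1_norm (z - w)) \<ge> real_of_int (linf_norm (w - z))" for z w :: "int^'d"
    proof -
      have "linf_norm (w - z) = linf_norm (z - w)" using linf_minus[of "w - z"] by (simp add: minus_diff_eq)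
      thus ?thesis using linf_le_l1[of "z - w"] by simp
    qed
    have neq: "z \<noteq> w" if "linf_norm (w - z) \<ge> 1" for z w :: "int^'d"
      using that linf_nonneg by (auto simp: linf_norm_def)
    have Wiff: "\<not> (cn \<le> LR_W \<alpha> \<omega> z w x) \<longleftrightarrow> x \<in> A z w"
      if x: "x \<in> space M" and l: "linf_norm (w - z) \<ge> 1" for z w x
    proof -
      define k where "k = real_of_int (l1_norm (z - w))"
      have "k \<ge> 1" using l1ge[of w z] l unfolding k_def by linarith
      hence p: "k powr (-\<alpha>) > 0" by simp
      have "LR_W \<alpha> \<omega> z w x = \<omega> {z,w} x / k powr (-\<alpha>)"
        by (simp add: LR_W_def r_pow_def k_def)
      thus ?thesis using p x by (simp add: A_def k_def pos_divide_less_eq not_le)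
    qed
    have Geq: "G = space M - U"
    proof (rule set_eqI)
      fix x show "x \<in> G \<longleftrightarrow> x \<in> space M - U"
      proof (cases "x \<in> space M")
        case x: True
        have "x \<notin> G \<longleftrightarrow> x \<in> U"
        proof
          assume "x \<notin> G"
          then obtain z w where z: "z \<in> Z" and w: "w \<notin> Box z (real n powr \<theta>)"
            and W: "\<not> (cn \<le> LR_W \<alpha> \<omega> z w x)" using x by (auto simp: G_def Z_def cn_eq)
          from w obtain m where m: "w \<in> T z m" using Tiff by blast
          have "x \<in> A z w" using Wiff[OF x linfT[OF m]] W by simp
          thus "x \<in> U" using z m by (auto simp: U_def B_def)
        next
          assume "x \<in> U"
          then obtain z m w where z: "z \<in> Z" and m: "w \<in> T z m" and a: "x \<in> A z w"
            by (auto simp: U_def B_def)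
          have "w \<notin> Box z (real n powr \<theta>)" using Tiff m by blast
          moreover have "\<not> (cn \<le> LR_W \<alpha> \<omega> z w x)" using Wiff[OF x linfT[OF m]] a by simp
          ultimately show "x \<notin> G" using z by (auto simp: G_def Z_def cn_eq)
        qed
        thus ?thesis using x by blast
      next
        case False thus ?thesis by (auto simp: G_def U_def B_def A_def)
      qed
    qed

    have finS: "finite {v::int^'d. linf_norm v = int m}" for m
    proof -
      have "finite {v::int^'d. linf_norm v \<le> int m}" by (intro card_ge_0_finite) (simp add: card_box)
      thus ?thesis by (rule rev_finite_subset) auto
    qed
    have finT: "finite (T z m)" for z m using finS by (simp add: T_def)
    have Ameas: "A z w \<in> sets M" if "linf_norm (w - z) \<ge> 1" for z w
    proof -
      have "\<omega> {z,w} \<in> borel_measurable M" using omeas edge neq[OF that] by blast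
      thus ?thesis unfolding A_def by measurable
    qed
    have Bmeas: "B z m \<in> sets M" for z m
      unfolding B_def using finT linfT Ameas by (intro sets.finite_UN) auto
    have Zeq: "Z = {v::int^'d. linf_norm v \<le> \<lfloor>c\<^sub>2 * real n\<rfloor>}"
      by (auto simp: Z_def Box_def le_floor_iff)
    have c2n: "0 \<le> \<lfloor>c\<^sub>2 * real n\<rfloor>" using assms(8) by (simp add: zero_le_mult_iff)
    have finZ: "finite Z" unfolding Zeq by (intro card_ge_0_finite) (use c2n in \<open>simp add: card_box[OF c2n]\<close>)
    have cardZ: "real (card Z) \<le> ((2*c\<^sub>2+1) * real n) ^ CARD('d)"
    proof -
      have "real (card Z) = (2 * real_of_int \<lfloor>c\<^sub>2 * real n\<rfloor> + 1) ^ CARD('d)"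
        unfolding Zeq card_box[OF c2n] using c2n by simp
      also have "\<dots> \<le> ((2*c\<^sub>2+1) * real n) ^ CARD('d)"
      proof (rule power_mono)
        have "real_of_int \<lfloor>c\<^sub>2 * real n\<rfloor> \<le> c\<^sub>2 * real n" by simp
        moreover have "1 \<le> real n" using n by simp
        moreover have "(2*c\<^sub>2+1) * real n = 2*(c\<^sub>2 * real n) + real n" by (simp add: algebra_simps)
        ultimately show "2 * real_of_int \<lfloor>c\<^sub>2 * real n\<rfloor> + 1 \<le> (2*c\<^sub>2+1) * real n"
          by linarith
      qed (use c2n in simp)
      finally show ?thesis .
    qed
    have Umeas: "U \<in> sets M" unfolding U_def using finZ Bmeas by (intro sets.finite_UN sets.countable_UN) auto
    define bb where "bb = (\<lambda>m::nat. cn * D * (if K \<le> m then real m powr (-(s+1)) else 0))"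
    have Abnd: "measure M (A z w) \<le> cn * real m powr (-\<alpha>)" if "w \<in> T z m" for z w m
    proof -
      have l: "linf_norm (w - z) = int m" "K \<le> m" using that by (auto simp: memT)
      have m1: "real m \<ge> 1" using l K2 by simp
      have "measure M (A z w) \<le> cn * real_of_int (l1_norm (z - w)) powr (-\<alpha>)"
        unfolding A_def using cn neq linfT[OF that]
        by (intro exp_tail[OF assms(1) distr] edge) auto
      also have "\<dots> \<le> cn * real m powr (-\<alpha>)"
      proof (rule mult_left_mono)
        show "real_of_int (l1_norm (z - w)) powr (-\<alpha>) \<le> real m powr (-\<alpha>)"
          using l1ge[of w z] l m1 assms(4) by (intro powr_mono2') (auto simp: d_def)
      qed (use cn in simp)
      finally show ?thesis .
    qed
    have Bbnd: "measure M (B z m) \<le> bb m" for z m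
    proof (cases "K \<le> m")
      case False thus ?thesis by (simp add: B_def T_def bb_def)
    next
      case True
      have m1: "real m \<ge> 1" using True K2 by simp
      have "measure M (B z m) \<le> (\<Sum>w\<in>T z m. measure M (A z w))"
        unfolding B_def using finT linfT Ameas by (intro measure_UNION_le) auto
      also have "\<dots> \<le> (\<Sum>w\<in>T z m. cn * real m powr (-\<alpha>))"
        by (rule sum_mono) (rule Abnd)
      also have "\<dots> = real (card {v::int^'d. linf_norm v = int m}) * (cn * real m powr (-\<alpha>))"
        using True by (simp add: T_def card_image inj_on_def)
      also have "\<dots> \<le> (D * real m ^ (CARD('d) - 1)) * (cn * real m powr (-\<alpha>))"
        using card_shell[of m, where 'd='d] m1 cn unfolding D_def d_def
        by (intro mult_right_mono) auto
      also have "\<dots> = cn * D * (real m powr (real CARD('d) - 1) * real m powr (-\<alpha>))"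
        using m1 by (simp add: powr_realpow[symmetric] of_nat_diff)
      also have "\<dots> = bb m"
        using m1 True by (simp add: bb_def powr_add[symmetric] s_def d_def algebra_simps)
      finally show ?thesis .
    qed

    define Q where "Q = cn * D * ((real K - 1) powr (-s) / s)"
    obtain bsum: "summable (\<lambda>m::nat. if K \<le> m then real m powr (-(s+1)) else 0)"
      and ble: "(\<Sum>m. if K \<le> m then real m powr (-(s+1)) else 0) \<le> (real K - 1) powr (-s) / s"
      using tail_series[OF s K2] by blast
    have bbsum: "summable bb" unfolding bb_def by (rule summable_mult[OF bsum])
    have bble: "suminf bb \<le> Q"
      unfolding bb_def Q_def suminf_mult[OF bsum] using ble cn D by (intro mult_left_mono) auto
    have UBz: "measure M (\<Union>m. B z m) \<le> Q" for z
    proof -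
      have sm: "summable (\<lambda>m. measure M (B z m))"
        by (rule summable_comparison_test[OF _ bbsum]) (use Bbnd in auto)
      have "measure M (\<Union>m. B z m) \<le> (\<Sum>m. measure M (B z m))"
        using Bmeas sm by (intro P.finite_measure_subadditive_countably) auto
      also have "\<dots> \<le> suminf bb" by (rule suminf_le[OF Bbnd sm bbsum])
      finally show ?thesis using bble by linarith
    qed
    have "measure M U \<le> (\<Sum>z\<in>Z. measure M (\<Union>m. B z m))"
      unfolding U_def using finZ Bmeas by (intro measure_UNION_le sets.countable_UN) auto
    also have "\<dots> \<le> (\<Sum>z\<in>Z. Q)" by (rule sum_mono) (rule UBz)
    also have "\<dots> = real (card Z) * Q" by simp
    also have "\<dots> \<le> ((2*c\<^sub>2+1) * real n) ^ CARD('d) * (cn * D * ((2 powr s) * (real n powr (- (\<theta> * s))) / s))"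
    proof (rule mult_mono[OF cardZ])
      have fl: "real K - 1 = real_of_int \<lfloor>R\<rfloor>" using R1 by (simp add: K_def)
      have h: "R / 2 \<le> real K - 1" unfolding fl using R1 fR real_of_int_floor_add_one_gt[of R] by linarith
      have "(real K - 1) powr (-s) \<le> (R/2) powr (-s)"
        using h R1 s by (intro powr_mono2') auto
      also have "\<dots> = (2 powr s) * (real n powr (- (\<theta> * s)))"
        using R1 n by (simp add: R_def powr_divide powr_powr powr_minus_divide field_simps)
      finally have "(real K - 1) powr (-s) \<le> (2 powr s) * (real n powr (- (\<theta> * s)))" .
      thus "Q \<le> cn * D * ((2 powr s) * (real n powr (- (\<theta> * s))) / s)"
        unfolding Q_def using cn D s by (intro mult_left_mono divide_right_mono) auto
      show "0 \<le> Q" unfolding Q_def using cn D s by simp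
    qed (use assms(8) in simp)
    also have "\<dots> = C * real n powr (real CARD('d) + 1 - \<theta> * (\<alpha> - real CARD('d)))"
    proof -
      have "real n powr (real CARD('d) + 1 - \<theta> * (\<alpha> - real CARD('d)))
            = real n ^ CARD('d) * real n * real n powr (- (\<theta> * s))"
      proof -
        have e: "real CARD('d) + 1 - \<theta> * (\<alpha> - real CARD('d)) = real CARD('d) + 1 + (- (\<theta> * s))"
          by (simp add: s_def d_def algebra_simps)
        have np: "real n > 0" using n by simp
        show ?thesis unfolding e powr_add using np by (simp add: powr_realpow)
      qed
      thus ?thesis by (simp add: C_def cn_def power_mult_distrib)
    qed
    finally have Ule: "measure M U \<le> C * real n powr (real CARD('d) + 1 - \<theta> * (\<alpha> - real CARD('d)))" .
    have "measure M G = 1 - measure M U" unfolding Geq using P.prob_compl[OF Umeas] .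
    thus "measure M {x \<in> space M. \<forall>z \<in> Box 0 (c\<^sub>2 * real n).
               \<forall>w. w \<notin> Box z (real n powr \<theta>) \<longrightarrow> c\<^sub>1 * real n \<le> LR_W \<alpha> \<omega> z w x}
           \<ge> 1 - C * real n powr (real CARD('d) + 1 - \<theta> * (\<alpha> - real CARD('d)))"
      using Ule unfolding G_def by linarith
  qed
qed

end
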